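(* Let the polynomials $H_m(z)$ be defined by the generating function \[ \sum_{m=0}^{\infty}H_m(z)t^m=\frac{1}{1+t^2+zt^3}. \] Then for every $m$ the zeros of $H_m(z)$ are real, and the set $\bigcup_{m=0}^{\infty}\mathcal{Z}(H_m)$ is dense in $(-\infty,\infty)$.
   Context: $\mathcal{Z}(H_m)$ denotes the set of zeros of $H_m(z)$. Convention: the zeros of the constant zero polynomial are considered real. *)

theory Defs
  imports "HOL-Analysis.Analysis" "HOL-Computational_Algebra.Formal_Power_Series"
begin

definition H :: "nat \<Rightarrow> complex \<Rightarrow> complex" where
  "H m z = fps_nth (inverse (1 + fps_X ^ 2 + fps_const z * fps_X ^ 3)) m"

end

theory Submission
  imports Defs
begin


fun Hp :: "nat \<Rightarrow> complex poly" where
  "Hp 0 = 1"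
| "Hp (Suc 0) = 0"
| "Hp (Suc (Suc 0)) = -1"
| "Hp (Suc (Suc (Suc n))) = - Hp (Suc n) - [:0,1:] * Hp n"

fun Hr :: "nat \<Rightarrow> real \<Rightarrow> real" where
  "Hr 0 x = 1"
| "Hr (Suc 0) x = 0"
| "Hr (Suc (Suc 0)) x = -1"
| "Hr (Suc (Suc (Suc n))) x = - Hr (Suc n) x - x * Hr n x"

lemma H_rec:
  "H (Suc (Suc (Suc n))) z = - H (Suc n) z - z * H n z"
  "H 0 z = 1" "H (Suc 0) z = 0" "H (Suc (Suc 0)) z = -1"
proof -
  define Q :: "complex fps" where "Q = 1 + fps_X ^ 2 + fps_const z * fps_X ^ 3"
  define I where "I = inverse Q"
  have Q0: "fps_nth Q 0 = 1" by (simp add: Q_def)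
  have IQ: "I * Q = 1" unfolding I_def by (rule inverse_mult_eq_1) (simp add: Q0)
  have e: "I * Q = I + fps_X^2 * I + fps_const z * (fps_X^3 * I)"
    by (simp add: Q_def algebra_simps)
  have c: "fps_nth (I * Q) n = fps_nth I n + (if n < 2 then 0 else fps_nth I (n - 2)) + z * (if n < 3 then 0 else fps_nth I (n-3))" for n
    unfolding e by (simp add: fps_X_power_mult_nth)
  have HI: "H m z = fps_nth I m" for m by (simp add: H_def I_def Q_def)
  have I0: "fps_nth I 0 = 1" unfolding I_def by (simp add: Q0)
  show "H 0 z = 1" using I0 HI by simp
  have "fps_nth (I*Q) 1 = 0" using IQ by simp
  then show I1: "H (Suc 0) z = 0" using c[of 1] HI by simp
  have "fps_nth (I*Q) 2 = 0" using IQ by simp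
  then show "H (Suc (Suc 0)) z = -1" using c[of 2] HI I0 by (simp add: eq_neg_iff_add_eq_0 numeral_2_eq_2)
  have "fps_nth (I*Q) (n+3) = 0" using IQ by simp
  then show "H (Suc (Suc (Suc n))) z = - H (Suc n) z - z * H n z" using c[of "n+3"] HI
    by (simp add: eq_neg_iff_add_eq_0 algebra_simps numeral_3_eq_3)
qed

lemma H_poly: "H m z = poly (Hp m) z"
  by (induction m rule: Hp.induct) (simp_all add: H_rec)

lemma Hp_real: "poly (Hp m) (of_real x) = of_real (Hr m x)"
  by (induction m rule: Hp.induct) simp_all

definition D :: "nat \<Rightarrow> nat" where "D m = (2*m+3) div 3 - (m+2) div 3 - 1"

lemma d3: "((x::nat) + 3) div 3 = x div 3 + 1" by simp
lemma D3: "D (Suc (Suc (Suc n))) = (2*n+3) div 3 - (n+2) div 3"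
proof -
  have e1: "(2 * Suc (Suc (Suc n)) + 3) div 3 = (2*n+3) div 3 + 2"
    using d3[of "2*n+3"] d3[of "2*n+3+3"] by (simp add: algebra_simps)
  have e2: "(Suc (Suc (Suc n)) + 2) div 3 = (n+2) div 3 + 1"
    using d3[of "n+2"] by (simp add: algebra_simps)
  have i3: "(n+2) div 3 \<le> (2*n+3) div 3" by (rule div_le_mono) simp
  then obtain d where d: "(2*n+3) div 3 = (n+2) div 3 + d" using le_iff_add by blast
  show ?thesis unfolding D_def e1 e2 d by simp
qed
lemma D_a: "D (Suc n) \<le> D (Suc (Suc (Suc n)))"
proof -
  have i1: "(2 * Suc n + 3) div 3 \<le> (2*n+3) div 3 + 1"
  proof -
    have "(2 * Suc n + 3) div 3 \<le> (2*n+3+3) div 3" by (rule div_le_mono) simp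
    then show ?thesis using d3[of "2*n+3"] by simp
  qed
  have i2: "(n+2) div 3 \<le> (Suc n + 2) div 3" by (rule div_le_mono) simp
  have i3: "(n+2) div 3 \<le> (2*n+3) div 3" by (rule div_le_mono) simp
  then obtain d where d: "(2*n+3) div 3 = (n+2) div 3 + d" using le_iff_add by blast
  have "D (Suc n) \<le> ((2*n+3) div 3 + 1) - (Suc n + 2) div 3 - 1"
    unfolding D_def using i1 by (intro diff_le_mono) 
  also have "\<dots> \<le> ((2*n+3) div 3 + 1) - (n + 2) div 3 - 1"
    using i2 by (intro diff_le_mono diff_le_mono2)
  also have "\<dots> = D (Suc (Suc (Suc n)))" unfolding D3 d by simp
  finally show ?thesis .
qed
lemma D_b: "n \<noteq> 1 \<Longrightarrow> D n + 1 \<le> D (Suc (Suc (Suc n)))"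
proof -
  assume n: "n \<noteq> 1"
  have i3: "(n+2) div 3 + 1 \<le> (2*n+3) div 3"
  proof (cases "n = 0")
    case True then show ?thesis by simp
  next
    case False
    then have "n + 2 + 3 \<le> 2*n+3" using n by simp
    then have "(n+2+3) div 3 \<le> (2*n+3) div 3" by (rule div_le_mono)
    then show ?thesis using d3[of "n+2"] by simp
  qed
  then obtain d where d: "(2*n+3) div 3 = (n+2) div 3 + 1 + d" using le_iff_add by blast
  show ?thesis unfolding D3 unfolding D_def d by simp
qed
lemma D_c: "(m + 2) div 3 + 1 \<le> k \<Longrightarrow> k < (2 * m + 3) div 3 \<Longrightarrow> m + 2 < 3 * k \<and> 3 * k < 2 * (m + 2) \<and> m + 2 < 3 * Suc k \<and> 3 * Suc k < 2 * (m + 2)"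
proof -
  assume h: "(m + 2) div 3 + 1 \<le> k" "k < (2 * m + 3) div 3"
  define q1 where "q1 = (m + 2) div 3"
  define r1 where "r1 = (m + 2) mod 3"
  define q2 where "q2 = (2 * m + 3) div 3"
  define r2 where "r2 = (2 * m + 3) mod 3"
  have f: "q1 * 3 + r1 = m + 2" "r1 < 3" "q2 * 3 + r2 = 2 * m + 3" "r2 < 3"
    unfolding q1_def r1_def q2_def r2_def
    by (rule div_mult_mod_eq, rule mod_less_divisor, simp, rule div_mult_mod_eq, rule mod_less_divisor, simp)
  have g: "q1 + 1 \<le> k" "k + 1 \<le> q2" using h unfolding q1_def q2_def by auto
  have s: "3 * Suc k = 3 * k + 3" by simp
  have "m + 2 < 3 * k" using f g by linarith
  moreover have "3 * k < 2 * (m + 2)"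
  proof -
    have "3 * k + 3 \<le> q2 * 3" using g(2) by simp
    moreover have "q2 * 3 \<le> 2 * m + 3" using f(3) by (metis le_add1)
    ultimately show ?thesis by simp
  qed
  moreover have "m + 2 < 3 * Suc k" unfolding s using f g by linarith
  moreover have "3 * Suc k < 2 * (m + 2)"
  proof -
    have "3 * k + 3 \<le> q2 * 3" using g(2) by simp
    moreover have "q2 * 3 \<le> 2 * m + 3" using f(3) by (metis le_add1)
    ultimately show ?thesis unfolding s by simp
  qed
  ultimately show ?thesis by blast
qed

lemma Hp_deg: "degree (Hp m) \<le> D m"
proof (induction m rule: Hp.induct)
  case (4 n)
  have a: "D (Suc n) \<le> D (Suc (Suc (Suc n)))" by (rule D_a)
  have b: "n \<noteq> 1 \<Longrightarrow> D n + 1 \<le> D (Suc (Suc (Suc n)))" by (rule D_b)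
  have "degree ([:0,1:] * Hp n) \<le> D (Suc (Suc (Suc n)))"
  proof (cases "n = 1")
    case True then show ?thesis by simp
  next
    case False
    have "degree ([:0,1:] * Hp n) \<le> degree [:0,1::complex:] + degree (Hp n)" by (rule degree_mult_le)
    then show ?thesis using b[OF False] 4(2) by simp
  qed
  then show ?case using 4(1) a
    by (simp add: degree_diff_le)
qed (simp_all add: D_def)



definition rr :: "real \<Rightarrow> real" where "rr t = 1 / sqrt (1 - 4 * (cos t)^2)"
definition zf :: "real \<Rightarrow> real" where "zf t = 2 * cos t * rr t ^ 3"
definition F :: "nat \<Rightarrow> real \<Rightarrow> real" where
  "F m t = 2 * sin ((real m + 1) * t) + sin ((real m + 3) * t) + (-2 * cos t) ^ (m+2) * sin t"

lemma sin_step: fixes x t :: real shows "sin ((x+2)*t) + sin (x*t) = 2 * sin ((x+1)*t) * cos t"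
proof -
  have "sin ((x+2)*t) = sin ((x+1)*t + t)" by (simp add: algebra_simps)
  moreover have "sin (x*t) = sin ((x+1)*t - t)" by (simp add: algebra_simps)
  ultimately show ?thesis by (simp add: sin_add sin_diff)
qed

lemma sin_rec3: fixes x t :: real shows "sin ((x+3)*t) = - (1 - 4*(cos t)^2) * sin ((x+1)*t) - 2 * cos t * sin (x*t)"
proof -
  have a: "sin ((x+3)*t) + sin ((x+1)*t) = 2 * sin ((x+2)*t) * cos t"
    using sin_step[of "x+1" t] by (simp add: add.assoc)
  have b: "sin ((x+2)*t) = 2 * sin ((x+1)*t) * cos t - sin (x*t)"
    using sin_step[of x t] by simp
  have a': "sin ((x+3)*t) = 2 * sin ((x+2)*t) * cos t - sin ((x+1)*t)" using a by simp
  show ?thesis by (simp only: a' b) (simp add: algebra_simps power2_eq_square)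
qed

lemma F_rec: "F (Suc (Suc (Suc n))) t = - (1 - 4*(cos t)^2) * F (Suc n) t - 2 * cos t * F n t"
proof -
  have s1: "sin ((real (Suc(Suc(Suc n))) + 1) * t) = - (1 - 4*(cos t)^2) * sin ((real (Suc n) + 1)*t) - 2 * cos t * sin ((real n + 1)*t)"
    using sin_rec3[of "real n + 1" t] by (simp add: algebra_simps)
  have s2: "sin ((real (Suc(Suc(Suc n))) + 3) * t) = - (1 - 4*(cos t)^2) * sin ((real (Suc n) + 3)*t) - 2 * cos t * sin ((real n + 3)*t)"
    using sin_rec3[of "real n + 3" t] by (simp add: algebra_simps)
  have p: "(-2 * cos t) ^ (Suc(Suc(Suc n))+2) = - (1 - 4*(cos t)^2) * (-2 * cos t) ^ (Suc n + 2) - 2 * cos t * (-2 * cos t) ^ (n+2)"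
    by (simp add: algebra_simps power2_eq_square)
  show ?thesis unfolding F_def s1 s2 p by (simp add: algebra_simps)
qed

lemma sin_mults: fixes t :: real shows
  "sin (2*t) = 2 * sin t * cos t"
  "sin (3*t) = sin t * (4 * (cos t)^2 - 1)"
  "sin (4*t) = 4 * sin t * cos t * (2 * (cos t)^2 - 1)"
  "sin (5*t) = sin t * (16 * (cos t)^4 - 12 * (cos t)^2 + 1)"
proof -
  have a: "sin (2*t) = 2 * sin t * cos t" using sin_step[of 0 t] by simp
  have b: "sin (3*t) = 2 * sin (2*t) * cos t - sin t" using sin_step[of 1 t] by simp
  have c: "sin (4*t) = 2 * sin (3*t) * cos t - sin (2*t)" using sin_step[of 2 t] by simp
  have d: "sin (5*t) = 2 * sin (4*t) * cos t - sin (3*t)" using sin_step[of 3 t] by simp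
  show "sin (2*t) = 2 * sin t * cos t" by (fact a)
  show b': "sin (3*t) = sin t * (4 * (cos t)^2 - 1)" by (simp only: b a) (simp add: algebra_simps power2_eq_square)
  show c': "sin (4*t) = 4 * sin t * cos t * (2 * (cos t)^2 - 1)" by (simp only: c b' a) (simp add: algebra_simps power2_eq_square)
  show "sin (5*t) = sin t * (16 * (cos t)^4 - 12 * (cos t)^2 + 1)" 
    by (simp only: d c' b') (simp add: algebra_simps power2_eq_square power4_eq_xxxx)
qed

lemma key:
  assumes "4 * (cos t)^2 < 1"
  shows "Hr m (zf t) * (sin t * (1 + 8 * (cos t)^2)) = rr t ^ m * F m t"
proof (induction m rule: Hp.induct)
  case 1
  show ?case unfolding F_def using sin_mults[of t]
    by (simp add: algebra_simps power2_eq_square)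
next
  case 2
  show ?case unfolding F_def using sin_mults[of t]
    by (simp add: algebra_simps power2_eq_square eval_nat_numeral)
next
  case 3
  have q: "rr t ^ 2 * (1 - 4 * (cos t)^2) = 1" using assms
    unfolding rr_def by (simp add: power_divide)
  have f2: "F 2 t = - (1 - 4 * (cos t)^2) * (sin t * (1 + 8 * (cos t)^2))"
    unfolding F_def using sin_mults[of t]
    by (simp add: algebra_simps power2_eq_square power4_eq_xxxx eval_nat_numeral)
  have "rr t ^ 2 * F 2 t = - (rr t ^ 2 * (1 - 4 * (cos t)^2)) * (sin t * (1 + 8 * (cos t)^2))"
    unfolding f2 by (simp add: algebra_simps)
  also have "\<dots> = - (sin t * (1 + 8 * (cos t)^2))" unfolding q by simp
  finally have "rr t ^ 2 * F 2 t = - (sin t * (1 + 8 * (cos t)^2))" .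
  then show ?case by (simp add: numeral_2_eq_2)
next
  case (4 n)
  have q: "rr t ^ 2 * (1 - 4 * (cos t)^2) = 1" using assms
    unfolding rr_def by (simp add: power_divide)
  have e: "rr t ^ (Suc (Suc (Suc n))) * (1 - 4 * (cos t)^2) = rr t ^ (Suc n)"
  proof -
    have "rr t ^ (Suc (Suc (Suc n))) * (1 - 4 * (cos t)^2) = rr t ^ Suc n * (rr t ^ 2 * (1 - 4 * (cos t)^2))"
      by (simp add: algebra_simps power2_eq_square)
    then show ?thesis unfolding q by simp
  qed
  have A: "Hr (Suc (Suc (Suc n))) (zf t) * (sin t * (1 + 8 * (cos t)^2))
      = - (Hr (Suc n) (zf t) * (sin t * (1 + 8 * (cos t)^2)))
        - 2 * cos t * rr t ^ 3 * (Hr n (zf t) * (sin t * (1 + 8 * (cos t)^2)))"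
    by (simp add: zf_def algebra_simps)
  also have "\<dots> = - (rr t ^ Suc n * F (Suc n) t) - 2 * cos t * rr t ^ 3 * (rr t ^ n * F n t)"
    by (simp only: 4)
  finally have A': "Hr (Suc (Suc (Suc n))) (zf t) * (sin t * (1 + 8 * (cos t)^2)) = - (rr t ^ Suc n * F (Suc n) t) - 2 * cos t * rr t ^ 3 * (rr t ^ n * F n t)" .
  have B: "rr t ^ (Suc (Suc (Suc n))) * F (Suc (Suc (Suc n))) t = - (rr t ^ (Suc (Suc (Suc n))) * (1 - 4 * (cos t)^2)) * F (Suc n) t - 2 * cos t * rr t ^ (Suc (Suc (Suc n))) * F n t"
    unfolding F_rec by (simp add: algebra_simps)
  have C: "rr t ^ (Suc (Suc (Suc n))) = rr t ^ 3 * rr t ^ n"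
    by (simp add: power3_eq_cube mult.assoc)
  have B': "rr t ^ 3 * rr t ^ n * F (Suc (Suc (Suc n))) t = - (rr t ^ Suc n) * F (Suc n) t - 2 * cos t * (rr t ^ 3 * rr t ^ n) * F n t"
    using B[unfolded e, unfolded C] .
  have D: "- (rr t ^ Suc n * F (Suc n) t) - 2 * cos t * rr t ^ 3 * (rr t ^ n * F n t) = - (rr t ^ Suc n) * F (Suc n) t - 2 * cos t * (rr t ^ 3 * rr t ^ n) * F n t"
    by (simp only: mult.assoc mult_minus_left)
  have X: "Hr (Suc (Suc (Suc n))) (zf t) * (sin t * (1 + 8 * (cos t)^2)) = rr t ^ 3 * rr t ^ n * F (Suc (Suc (Suc n))) t"
    by (rule trans[OF trans[OF A' D] sym[OF B']])
  have C2: "rr t ^ 3 * rr t ^ n * F (Suc (Suc (Suc n))) t = rr t ^ (Suc (Suc (Suc n))) * F (Suc (Suc (Suc n))) t"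
    by (rule arg_cong[where f="\<lambda>u. u * F (Suc (Suc (Suc n))) t", OF sym[OF C]])
  show ?case by (rule trans[OF X C2])
qed



definition good :: "real \<Rightarrow> bool" where "good t \<longleftrightarrow> pi/3 < t \<and> t < 2*pi/3"

lemma good_cos: assumes "good t" shows "4 * (cos t)^2 < 1" "0 < sin t" "\<bar>cos t\<bar> < 1/2"
proof -
  have t: "pi/3 < t" "t < 2*pi/3" using assms unfolding good_def by auto
  have "cos t < cos (pi/3)" by (rule cos_monotone_0_pi) (use t pi_gt_zero in auto)
  moreover have "cos (2*pi/3) < cos t" by (rule cos_monotone_0_pi) (use t pi_gt_zero in auto)
  ultimately have c: "cos t < 1/2" "-1/2 < cos t" by (simp_all add: cos_60 cos_120)
  then show "\<bar>cos t\<bar> < 1/2" by simp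
  have "\<bar>cos t\<bar>^2 < (1/2)^2"
    using c by (intro power_strict_mono) auto
  then have "(cos t)^2 < (1/2)^2" by simp
  then show "4 * (cos t)^2 < 1" by (simp add: power_divide)
  show "0 < sin t" by (rule sin_gt_zero) (use t pi_gt_zero in auto)
qed

lemma F_at:
  fixes m k :: nat
  defines "t \<equiv> real k * pi / (real m + 2)"
  shows "F m t = sin t * ((-2 * cos t) ^ (m+2) - (-1) ^ k)"
proof -
  have a: "(real m + 1) * t = real k * pi - t" unfolding t_def by (simp add: field_simps)
  have b: "(real m + 3) * t = real k * pi + t" unfolding t_def by (simp add: field_simps)
  show ?thesis unfolding F_def a b by (simp add: sin_diff sin_add algebra_simps)
qed

lemma F_sign:
  fixes m k :: nat
  defines "t \<equiv> real k * pi / (real m + 2)"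
  assumes "good t"
  shows "(-1) ^ k * F m t < 0"
proof -
  have c: "\<bar>cos t\<bar> < 1/2" and s: "0 < sin t" using good_cos[OF assms(2)] by auto
  have "\<bar>(-2 * cos t) ^ (m+2)\<bar> = \<bar>2 * cos t\<bar> ^ (m+2)" by (simp add: power_abs abs_mult)
  also have "\<dots> < 1" using c by (intro power_less_one_iff[THEN iffD2] ; simp add: abs_mult)
  finally have p: "\<bar>(-2 * cos t) ^ (m+2)\<bar> < 1" .
  have "(-1) ^ k * F m t = sin t * ((-1) ^ k * (-2 * cos t) ^ (m+2) - 1)"
    unfolding F_at[of m k, folded t_def] by (simp add: algebra_simps)
  moreover have "(-1::real) ^ k * (-2 * cos t) ^ (m+2) < 1"
    using p by (cases "even k") (auto simp: abs_less_iff)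
  ultimately show ?thesis using s by (simp add: mult_pos_neg)
qed

lemma rr_pos: "4 * (cos t)^2 < 1 \<Longrightarrow> 0 < rr t"
  unfolding rr_def by simp

lemma F_cont: "continuous_on S (F m)"
  unfolding F_def by (intro continuous_intros)

lemma zero_between:
  fixes m k :: nat
  defines "a \<equiv> real k * pi / (real m + 2)" and "b \<equiv> real (Suc k) * pi / (real m + 2)"
  assumes ga: "good a" and gb: "good b"
  shows "\<exists>t. a < t \<and> t < b \<and> F m t = 0"
proof -
  have sa: "(-1) ^ k * F m a < 0" unfolding a_def by (rule F_sign) (use ga a_def in simp)
  have sb: "(-1) ^ Suc k * F m b < 0" unfolding b_def by (rule F_sign) (use gb b_def in simp)
  have ab: "a < b" unfolding a_def b_def by (intro divide_strict_right_mono) auto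
  have "\<exists>x. a \<le> x \<and> x \<le> b \<and> F m x = 0"
  proof (cases "even k")
    case True
    then have "F m a < 0" "0 < F m b" using sa sb by auto
    then show ?thesis using ab by (intro IVT') (auto intro: F_cont)
  next
    case False
    then have "0 < F m a" "F m b < 0" using sa sb by auto
    then show ?thesis using ab by (intro IVT2') (auto intro: F_cont)
  qed
  then obtain x where x: "a \<le> x" "x \<le> b" "F m x = 0" by blast
  have "x \<noteq> a" using sa x by auto
  moreover have "x \<noteq> b" using sb x by auto
  ultimately show ?thesis using x by (intro exI[of _ x]) auto
qed

lemma Hr_zero: assumes "good t" "F m t = 0" shows "Hr m (zf t) = 0"
proof -
  have g: "4 * (cos t)^2 < 1" "0 < sin t" using good_cos[OF assms(1)] by auto
  have "Hr m (zf t) * (sin t * (1 + 8 * (cos t)^2)) = 0" using key[OF g(1), of m] assms(2) by simp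
  moreover have "sin t * (1 + 8 * (cos t)^2) \<noteq> 0"
  proof -
    have "0 < 1 + 8 * (cos t)^2" by (simp add: add_pos_nonneg)
    then show ?thesis using g(2) by simp
  qed
  ultimately show ?thesis by simp
qed

lemma Hr_nonzero:
  fixes m k :: nat
  defines "a \<equiv> real k * pi / (real m + 2)"
  assumes ga: "good a"
  shows "Hr m (zf a) \<noteq> 0"
proof
  assume h: "Hr m (zf a) = 0"
  have g: "4 * (cos a)^2 < 1" using good_cos[OF ga] by auto
  have "rr a ^ m * F m a = 0" using key[OF g, of m] h by simp
  then have "F m a = 0" using rr_pos[OF g] by simp
  moreover have "(-1) ^ k * F m a < 0" unfolding a_def by (rule F_sign) (use ga a_def in simp)
  ultimately show False by simp
qed



definition Af :: "real \<Rightarrow> real" where "Af t = -2 * cos t * rr t"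

lemma rr_sq: "4 * (cos t)^2 < 1 \<Longrightarrow> rr t ^ 2 * (1 - 4 * (cos t)^2) = 1"
  unfolding rr_def by (simp add: power_divide)

lemma zf_A: assumes "4 * (cos t)^2 < 1" shows "zf t = -(Af t + Af t ^ 3)"
proof -
  have q: "rr t ^ 2 * (1 - 4 * (cos t)^2) = 1" by (rule rr_sq[OF assms])
  have "-(Af t + Af t ^ 3) = 2 * cos t * rr t + 8 * (cos t)^3 * rr t ^ 3"
    unfolding Af_def by (simp add: algebra_simps power3_eq_cube)
  also have "2 * cos t * rr t = 2 * cos t * rr t * (rr t ^ 2 * (1 - 4 * (cos t)^2))" using q by simp
  finally have "-(Af t + Af t ^ 3) = 2 * cos t * rr t * (rr t ^ 2 * (1 - 4 * (cos t)^2)) + 8 * (cos t)^3 * rr t ^ 3" .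
  also have "\<dots> = 2 * cos t * rr t ^ 3" by (simp add: algebra_simps power3_eq_cube power2_eq_square)
  finally show ?thesis unfolding zf_def by simp
qed

lemma cube_inj: fixes a b :: real assumes "a + a^3 = b + b^3" shows "a = b"
proof -
  have e: "(a - b) * (1 + a^2 + a*b + b^2) = (a + a^3) - (b + b^3)"
    by (simp add: algebra_simps power2_eq_square power3_eq_cube)
  have "a^2 + a*b + b^2 = (a + b/2)^2 + 3 * b^2 / 4"
    by (simp add: algebra_simps power2_eq_square)
  then have "0 \<le> a^2 + a*b + b^2" by (simp add: add_nonneg_nonneg)
  then have "0 < 1 + a^2 + a*b + b^2" by linarith
  then show ?thesis using e assms by simp
qed

lemma A_inj: assumes g1: "good t1" and g2: "good t2" and e: "Af t1 = Af t2" shows "t1 = t2"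
proof -
  have c1: "4 * (cos t1)^2 < 1" and c2: "4 * (cos t2)^2 < 1" using good_cos g1 g2 by auto
  have q1: "rr t1 ^ 2 * (1 - 4 * (cos t1)^2) = 1" by (rule rr_sq[OF c1])
  have q2: "rr t2 ^ 2 * (1 - 4 * (cos t2)^2) = 1" by (rule rr_sq[OF c2])
  define X where "X = Af t1 ^ 2"
  have X1: "X * (1 - 4 * (cos t1)^2) = 4 * (cos t1)^2"
  proof -
    have "X * (1 - 4 * (cos t1)^2) = 4 * (cos t1)^2 * (rr t1 ^ 2 * (1 - 4 * (cos t1)^2))"
      unfolding X_def Af_def by (simp add: algebra_simps power2_eq_square)
    then show ?thesis using q1 by simp
  qed
  have X': "X = Af t2 ^ 2" unfolding X_def e ..
  have X2: "X * (1 - 4 * (cos t2)^2) = 4 * (cos t2)^2"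
  proof -
    have "X * (1 - 4 * (cos t2)^2) = 4 * (cos t2)^2 * (rr t2 ^ 2 * (1 - 4 * (cos t2)^2))"
      unfolding X' Af_def by (simp add: algebra_simps power2_eq_square)
    then show ?thesis using q2 by simp
  qed
  have X0: "0 \<le> X" unfolding X_def by simp
  have u1: "(cos t1)^2 = X / (4 + 4 * X)"
  proof -
    have "(cos t1)^2 * (4 + 4 * X) = X" using X1 by (simp add: algebra_simps)
    moreover have "4 + 4 * X \<noteq> 0" using X0 by simp
    ultimately show ?thesis by (simp add: eq_divide_eq)
  qed
  have u2: "(cos t2)^2 = X / (4 + 4 * X)"
  proof -
    have "(cos t2)^2 * (4 + 4 * X) = X" using X2 by (simp add: algebra_simps)
    moreover have "4 + 4 * X \<noteq> 0" using X0 by simp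
    ultimately show ?thesis by (simp add: eq_divide_eq)
  qed
  have rreq: "rr t1 = rr t2" unfolding rr_def u1 u2 by (rule refl)
  have "-2 * cos t1 * rr t1 = -2 * cos t2 * rr t1" using e unfolding Af_def rreq .
  then have "cos t1 * rr t1 = cos t2 * rr t1" by simp
  then have "cos t1 = cos t2" using rr_pos[OF c1] by simp
  moreover have "0 \<le> t1" "t1 \<le> pi" "0 \<le> t2" "t2 \<le> pi"
    using g1 g2 pi_gt_zero unfolding good_def by linarith+
  ultimately show ?thesis using cos_inj_pi by blast
qed

lemma zf_inj: assumes g1: "good t1" and g2: "good t2" and e: "zf t1 = zf t2" shows "t1 = t2"
proof -
  have c1: "4 * (cos t1)^2 < 1" and c2: "4 * (cos t2)^2 < 1" using good_cos g1 g2 by auto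
  have "Af t1 + Af t1 ^ 3 = Af t2 + Af t2 ^ 3" using e zf_A[OF c1] zf_A[OF c2] by simp
  then have "Af t1 = Af t2" by (rule cube_inj)
  then show ?thesis by (rule A_inj[OF g1 g2])
qed



lemma cube_surj: fixes x :: real shows "\<exists>a. a + a^3 = x"
proof -
  define b where "b = \<bar>x\<bar> + 1"
  have b0: "0 < b" unfolding b_def by simp
  have "0 \<le> b^3" using b0 by simp
  then have h1: "x \<le> b + b^3" unfolding b_def by linarith
  have m: "(-b)^3 = - (b^3)" by (simp add: power3_eq_cube)
  have h2: "-b + (-b)^3 \<le> x" unfolding m using \<open>0 \<le> b^3\<close> unfolding b_def by linarith
  have "\<exists>a. -b \<le> a \<and> a \<le> b \<and> a + a^3 = x"
    by (rule IVT'[of "\<lambda>a. a + a^3"]) (use h1 h2 b0 in \<open>auto intro!: continuous_intros\<close>)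
  then show ?thesis by blast
qed

lemma zf_surj: "\<exists>t. good t \<and> zf t = x"
proof -
  obtain a where a: "a + a^3 = -x" using cube_surj by blast
  define s where "s = sqrt (1 + a^2)"
  have s0: "0 < s" unfolding s_def by (simp add: add_pos_nonneg)
  have s2: "s^2 = 1 + a^2" unfolding s_def by simp
  define c where "c = - a / (2 * s)"
  have "\<bar>a\<bar> < s" unfolding s_def
    by (metis real_sqrt_abs real_sqrt_less_mono less_add_one add.commute)
  then have cb: "\<bar>c\<bar> < 1/2" unfolding c_def using s0 by (simp add: abs_divide abs_mult field_simps)
  define t where "t = arccos c"
  have ct: "cos t = c" unfolding t_def using cb by (intro cos_arccos) auto
  have a3: "arccos (1/2) = pi/3" using arccos_cos[of "pi/3"] cos_60 pi_gt_zero by simp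
  have a23: "arccos (-1/2) = 2*pi/3" using arccos_cos[of "2*pi/3"] cos_120 pi_gt_zero by simp
  have "arccos (1/2) < arccos c" using cb by (intro arccos_less_arccos) auto
  moreover have "arccos c < arccos (-1/2)" using cb by (intro arccos_less_arccos) auto
  ultimately have g: "good t" unfolding good_def t_def a3 a23 by simp
  have c4: "4 * (cos t)^2 < 1" using good_cos[OF g] by simp
  have e1: "4 * c^2 = a^2 / s^2" unfolding c_def by (simp add: power_divide power_mult_distrib)
  have e2: "1 - a^2 / s^2 = (s^2 - a^2) / s^2" using s0 by (simp add: field_simps)
  have "1 - 4 * (cos t)^2 = 1 - a^2 / s^2" by (simp add: ct e1)
  also have "\<dots> = (s^2 - a^2) / s^2" by (rule e2)
  also have "\<dots> = 1 / s^2" by (simp add: s2)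
  finally have "1 - 4 * (cos t)^2 = 1 / s^2" .
  then have rt: "rr t = s" unfolding rr_def using s0 by (simp add: real_sqrt_divide)
  have "Af t = a" unfolding Af_def rt ct c_def using s0 by simp
  then have "zf t = x" using zf_A[OF c4] a by simp
  then show ?thesis using g by blast
qed

lemma zf_cont: assumes "good t" shows "isCont zf t"
proof -
  have c4: "4 * (cos t)^2 < 1" using good_cos[OF assms] by simp
  have "isCont (\<lambda>t. 2 * cos t * (1 / sqrt (1 - 4 * (cos t)^2)) ^ 3) t"
    using c4 by (intro continuous_intros) auto
  then show ?thesis unfolding zf_def[abs_def] rr_def[abs_def] .
qed



lemma good_iff:
  fixes j m :: nat
  shows "good (real j * pi / (real m + 2)) \<longleftrightarrow> m + 2 < 3 * j \<and> 3 * j < 2 * (m + 2)"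
proof -
  define M where "M = real m + 2"
  have M0: "0 < M" unfolding M_def by simp
  have e1: "real j * pi / M = (real j / M) * pi" by simp
  have e2: "pi / 3 = (1/3) * pi" by simp
  have e3: "2 * pi / 3 = (2/3) * pi" by simp
  have "pi/3 < real j * pi / M \<longleftrightarrow> 1/3 < real j / M"
    unfolding e1 e2 using pi_gt_zero by (simp only: mult_less_cancel_right_pos)
  also have "\<dots> \<longleftrightarrow> M < 3 * real j" using M0 by (simp add: field_simps)
  finally have i1: "pi/3 < real j * pi / M \<longleftrightarrow> M < 3 * real j" .
  have "real j * pi / M < 2*pi/3 \<longleftrightarrow> real j / M < 2/3"
    unfolding e1 e3 using pi_gt_zero by (simp only: mult_less_cancel_right_pos)
  also have "\<dots> \<longleftrightarrow> 3 * real j < 2 * M" using M0 by (simp add: field_simps)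
  finally have i2: "real j * pi / M < 2*pi/3 \<longleftrightarrow> 3 * real j < 2 * M" .
  have "M = real (m + 2)" unfolding M_def by simp
  moreover have "3 * real j = real (3 * j)" by simp
  moreover have "2 * M = real (2 * (m + 2))" unfolding M_def by simp
  ultimately have "M < 3 * real j \<longleftrightarrow> m + 2 < 3 * j" "3 * real j < 2 * M \<longleftrightarrow> 3 * j < 2 * (m + 2)"
    by (simp_all only: of_nat_less_iff)
  then show ?thesis unfolding good_def M_def[symmetric] using i1 i2 by blast
qed

lemma real_roots:
  assumes nz: "\<exists>z. H m z \<noteq> 0" and z0: "H m z0 = 0"
  shows "z0 \<in> \<real>"
proof (rule ccontr)
  assume nr: "z0 \<notin> \<real>"
  define p where "p = Hp m"
  have p0: "p \<noteq> 0" using nz unfolding p_def H_poly by auto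
  define K0 where "K0 = (m + 2) div 3 + 1"
  define K1 where "K1 = (2 * m + 3) div 3"
  define a where "a k = real k * pi / (real m + 2)" for k :: nat
  define th where "th k = (SOME t. a k < t \<and> t < a (Suc k) \<and> F m t = 0)" for k
  have gk: "good (a k) \<and> good (a (Suc k))" if "k \<in> {K0..<K1}" for k
  proof -
    have kk: "(m + 2) div 3 + 1 \<le> k" "k < (2 * m + 3) div 3" using that unfolding K0_def K1_def by auto
    from D_c[OF kk] have "m + 2 < 3 * k \<and> 3 * k < 2 * (m + 2)" "m + 2 < 3 * Suc k \<and> 3 * Suc k < 2 * (m + 2)" by blast+
    then show ?thesis unfolding a_def good_iff by blast
  qed
  have th: "a k < th k \<and> th k < a (Suc k) \<and> F m (th k) = 0" if "k \<in> {K0..<K1}" for k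
  proof -
    have "\<exists>t. a k < t \<and> t < a (Suc k) \<and> F m t = 0"
      using zero_between[of k m] gk[OF that] unfolding a_def by blast
    then show ?thesis unfolding th_def by (rule someI_ex)
  qed
  have thg: "good (th k)" if "k \<in> {K0..<K1}" for k
    using gk[OF that] th[OF that] unfolding good_def by auto
  have amono: "a (Suc k) \<le> a k'" if "k < k'" for k k'
    unfolding a_def using that pi_gt_zero by (intro divide_right_mono mult_right_mono) auto
  have inj1: "inj_on th {K0..<K1}"
  proof (rule inj_onI)
    fix k k' assume k: "k \<in> {K0..<K1}" and k': "k' \<in> {K0..<K1}" and e: "th k = th k'"
    show "k = k'"
    proof (rule ccontr)
      assume "k \<noteq> k'"
      then consider "k < k'" | "k' < k" by linarith
      then show False
      proof cases
        case 1 then show False using th[OF k] th[OF k'] amono[OF 1] e by linarith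
      next
        case 2 then show False using th[OF k] th[OF k'] amono[OF 2] e by linarith
      qed
    qed
  qed
  define g where "g k = complex_of_real (zf (th k))" for k
  have inj2: "inj_on g {K0..<K1}"
  proof (rule inj_onI)
    fix k k' assume k: "k \<in> {K0..<K1}" and k': "k' \<in> {K0..<K1}" and e: "g k = g k'"
    then have "zf (th k) = zf (th k')" unfolding g_def by simp
    then have "th k = th k'" using zf_inj thg k k' by blast
    then show "k = k'" using inj1 k k' by (meson inj_onD)
  qed
  have roots: "g k \<in> {x. poly p x = 0}" if "k \<in> {K0..<K1}" for k
  proof -
    have "Hr m (zf (th k)) = 0" using Hr_zero thg[OF that] th[OF that] by blast
    then show ?thesis unfolding g_def p_def by (simp add: Hp_real)
  qed
  have notin: "z0 \<notin> g ` {K0..<K1}" using nr unfolding g_def by auto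
  have sub: "insert z0 (g ` {K0..<K1}) \<subseteq> {x. poly p x = 0}"
    using roots z0 unfolding p_def H_poly by auto
  have c1: "card (insert z0 (g ` {K0..<K1})) = Suc (K1 - K0)"
    using notin card_image[OF inj2] by simp
  have c2: "card (insert z0 (g ` {K0..<K1})) \<le> card {x. poly p x = 0}"
    by (rule card_mono[OF poly_roots_finite[OF p0] sub])
  have c3: "card {x. poly p x = 0} \<le> D m"
    using card_poly_roots_bound[OF p0] Hp_deg[of m] unfolding p_def by linarith
  show False using c1 c2 c3 unfolding D_def K0_def K1_def by simp
qed

lemma dense_zero:
  fixes x e :: real
  assumes e: "0 < e"
  shows "\<exists>m y. (\<exists>z. H m z \<noteq> 0) \<and> H m (complex_of_real y) = 0 \<and> dist y x < e"
proof -
  obtain t0 where g0: "good t0" and zx: "zf t0 = x" using zf_surj by blast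
  have "continuous (at t0) zf" using zf_cont[OF g0] .
  then obtain d where d: "0 < d" and dd: "\<And>t. dist t t0 < d \<Longrightarrow> dist (zf t) (zf t0) < e"
    using e unfolding continuous_at_eps_delta by blast
  define d' where "d' = min d (min (t0 - pi/3) (2*pi/3 - t0))"
  have d'0: "0 < d'" unfolding d'_def using d g0 unfolding good_def by auto
  obtain N :: nat where N: "2 * pi / d' < real N" using reals_Archimedean2 by blast
  define m where "m = N"
  define M where "M = real m + 2"
  have M0: "0 < M" unfolding M_def by simp
  have "2 * pi / d' < M" using N unfolding M_def m_def by simp
  then have Md: "2 * pi / M < d'" using M0 d'0 by (simp add: field_simps)
  define y where "y = t0 * M / pi"
  have y0: "0 \<le> y" unfolding y_def using g0 M0 pi_gt_zero unfolding good_def by simp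
  define k where "k = nat \<lfloor>y\<rfloor> + 1"
  have kr: "real k = of_int \<lfloor>y\<rfloor> + 1" unfolding k_def using y0 by simp
  have ky1: "y < real k" using kr by linarith
  have ky2: "real k \<le> y + 1" using kr by linarith
  define a where "a j = real j * pi / M" for j :: nat
  have a_eq: "a j = real j * pi / (real m + 2)" for j unfolding a_def M_def ..
  have t0a: "t0 < a k"
  proof -
    have "t0 = y * pi / M" unfolding y_def using pi_gt_zero M0 by simp
    also have "\<dots> < a k" unfolding a_def using ky1 pi_gt_zero M0 by (intro divide_strict_right_mono mult_strict_right_mono)
    finally show ?thesis .
  qed
  have ab: "a (Suc k) \<le> t0 + 2 * pi / M"
  proof -
    have "a (Suc k) \<le> (y + 2) * pi / M" unfolding a_def using ky2 pi_gt_zero M0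
      by (intro divide_right_mono mult_right_mono) auto
    also have "\<dots> = t0 + 2 * pi / M" unfolding y_def using pi_gt_zero M0 by (simp add: field_simps)
    finally show ?thesis .
  qed
  have aa: "a k < a (Suc k)" unfolding a_def using pi_gt_zero M0
    by (intro divide_strict_right_mono mult_strict_right_mono) auto
  have up: "a (Suc k) < t0 + d'" using ab Md by linarith
  have "d' \<le> 2*pi/3 - t0" "d' \<le> t0 - pi/3" "d' \<le> d" unfolding d'_def by auto
  then have ga: "good (a k)" and gb: "good (a (Suc k))"
    using g0 t0a up aa unfolding good_def by linarith+
  obtain t where t: "a k < t" "t < a (Suc k)" "F m t = 0"
    using zero_between[of k m] ga gb unfolding a_eq by blast
  have gt: "good t" using ga gb t unfolding good_def by linarith
  have "Hr m (zf t) = 0" by (rule Hr_zero[OF gt t(3)])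
  then have hz: "H m (complex_of_real (zf t)) = 0" by (simp add: H_poly Hp_real)
  have "Hr m (zf (a k)) \<noteq> 0" unfolding a_eq by (rule Hr_nonzero) (use ga a_eq in simp)
  then have hn: "H m (complex_of_real (zf (a k))) \<noteq> 0" by (simp add: H_poly Hp_real)
  have "dist t t0 < d" using t0a t up \<open>d' \<le> d\<close> unfolding dist_real_def by linarith
  then have "dist (zf t) x < e" using dd zx by blast
  then show ?thesis using hz hn by blast
qed

theorem theorem3p1:
  shows "(\<forall>m. (\<exists>z. H m z \<noteq> 0) \<longrightarrow> (\<forall>z. H m z = 0 \<longrightarrow> z \<in> \<real>))
       \<and> closure (\<Union>m \<in> {m. \<exists>z. H m z \<noteq> 0}. {x::real. H m (complex_of_real x) = 0}) = UNIV"
proof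
  show "\<forall>m. (\<exists>z. H m z \<noteq> 0) \<longrightarrow> (\<forall>z. H m z = 0 \<longrightarrow> z \<in> \<real>)"
    using real_roots by blast
  show "closure (\<Union>m \<in> {m. \<exists>z. H m z \<noteq> 0}. {x::real. H m (complex_of_real x) = 0}) = UNIV"
  proof (rule set_eqI, rule iffI)
    fix x :: real
    show "x \<in> closure (\<Union>m \<in> {m. \<exists>z. H m z \<noteq> 0}. {x::real. H m (complex_of_real x) = 0})"
      unfolding closure_approachable
    proof (intro allI impI)
      fix e :: real assume "0 < e"
      then obtain m y where "\<exists>z. H m z \<noteq> 0" "H m (complex_of_real y) = 0" "dist y x < e"
        using dense_zero by blast
      then show "\<exists>y\<in>\<Union>m \<in> {m. \<exists>z. H m z \<noteq> 0}. {x::real. H m (complex_of_real x) = 0}. dist y x < e"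
        by blast
    qed
  qed simp
qed



end
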